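(* Let $M$ be a generic metric space and let $r$ be a real number with $0<r<\min\{s(M)/4,\ e(M)/4,\ t(M)/6\}$. Then the sphere $S_r(M)=\{Y\in\mathcal{GH}: d_{GH}(M,Y)=r\}$ is path connected in $\mathcal{GH}$, i.e., any two of its elements can be joined by a continuous curve in $\mathcal{GH}$ whose image lies in $S_r(M)$.
   Context: For a metric space $M$ with $\#M\ge3$: $s(M)=\inf\{|xx'|: x\ne x'\}$; $t(M)=\inf\{|xx'|+|x'x''|-|xx''|: x,x',x''\text{ pairwise distinct}\}$; $S(M)$ is the set of bijections $M\to M$ and $e(M)=\inf\{\operatorname{dis}f: f\in S(M), f\ne\mathrm{id}\}$, where $\operatorname{dis}f=\sup_{x,x'}||xx'|-|f(x)f(x')||$. $M$ is called generic if $\#M\ge3$ and $s(M),t(M),e(M)$ are all positive. $d_{GH}$ is the Gromov–Hausdorff distance (possibly infinite): $d_{GH}(X,Y)$ is the infimum of $r$ such that there exist a metric space $Z$ and subsets $X',Y'\subset Z$ isometric to $X,Y$ with Hausdorff distance $d_H(X',Y')\le r$. $\mathcal{GH}$ is the class (in the sense of von Neumann–Bernays–Gödel set theory) of representatives of isometry classes of all metric spaces; for each cardinal $n$ the subclass $\mathcal{GH}_n$ of spaces of cardinality at most $n$ is a set with topology based on open $d_{GH}$-balls, and a map from a topological space into $\mathcal{GH}$ is continuous if it is continuous into some (equivalently, every) $\mathcal{GH}_n$ containing its image. A continuous curve is a continuous map from a segment $[a,b]$. *)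

theory Defs
  imports "HOL-Analysis.Analysis"
begin

text \<open>A metric space is a pair of a carrier set and a distance function, i.e. the
  library locale Metric_space.  Distances that may be infinite are valued in ereal.\<close>

definition s_inv :: "'a set \<Rightarrow> ('a \<Rightarrow> 'a \<Rightarrow> real) \<Rightarrow> ereal" where
  "s_inv M d = (INF p \<in> {(x, x'). x \<in> M \<and> x' \<in> M \<and> x \<noteq> x'}. ereal (d (fst p) (snd p)))"

definition t_inv :: "'a set \<Rightarrow> ('a \<Rightarrow> 'a \<Rightarrow> real) \<Rightarrow> ereal" where
  "t_inv M d = (INF p \<in> {(x, x', x''). x \<in> M \<and> x' \<in> M \<and> x'' \<in> M \<and>
        x \<noteq> x' \<and> x' \<noteq> x'' \<and> x \<noteq> x''}.
     (case p of (x, x', x'') \<Rightarrow> ereal (d x x' + d x' x'' - d x x'')))"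

definition distortion :: "'a set \<Rightarrow> ('a \<Rightarrow> 'a \<Rightarrow> real) \<Rightarrow> ('a \<Rightarrow> 'a) \<Rightarrow> ereal" where
  "distortion M d f = (SUP p \<in> M \<times> M. ereal \<bar>d (fst p) (snd p) - d (f (fst p)) (f (snd p))\<bar>)"

definition e_inv :: "'a set \<Rightarrow> ('a \<Rightarrow> 'a \<Rightarrow> real) \<Rightarrow> ereal" where
  "e_inv M d = (INF f \<in> {f. bij_betw f M M \<and> (\<exists>x\<in>M. f x \<noteq> x)}. distortion M d f)"

definition generic :: "'a set \<Rightarrow> ('a \<Rightarrow> 'a \<Rightarrow> real) \<Rightarrow> bool" where
  "generic M d \<longleftrightarrow> Metric_space M d \<and> (infinite M \<or> card M \<ge> 3) \<and>
     s_inv M d > 0 \<and> t_inv M d > 0 \<and> e_inv M d > 0"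

definition hausdorff_dist :: "('c \<Rightarrow> 'c \<Rightarrow> real) \<Rightarrow> 'c set \<Rightarrow> 'c set \<Rightarrow> ereal" where
  "hausdorff_dist d A B = max (SUP a \<in> A. INF b \<in> B. ereal (d a b))
                              (SUP b \<in> B. INF a \<in> A. ereal (d a b))"

text \<open>The ambient space Z is taken
  to be the disjoint union X \<squnion> Y with a metric extending those of X and Y
  (standard equivalent form of the definition via arbitrary ambient Z).\<close>
definition dGH :: "'a set \<Rightarrow> ('a \<Rightarrow> 'a \<Rightarrow> real) \<Rightarrow> 'b set \<Rightarrow> ('b \<Rightarrow> 'b \<Rightarrow> real) \<Rightarrow> ereal" where
  "dGH X dX Y dY = (INF dZ \<in> {dZ. Metric_space (X <+> Y) dZ \<and>
        (\<forall>x\<in>X. \<forall>x'\<in>X. dZ (Inl x) (Inl x') = dX x x') \<and>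
        (\<forall>y\<in>Y. \<forall>y'\<in>Y. dZ (Inr y) (Inr y') = dY y y')}.
      hausdorff_dist dZ (Inl ` X) (Inr ` Y))"

definition isometric :: "'a set \<Rightarrow> ('a \<Rightarrow> 'a \<Rightarrow> real) \<Rightarrow> 'b set \<Rightarrow> ('b \<Rightarrow> 'b \<Rightarrow> real) \<Rightarrow> bool" where
  "isometric X dX Y dY \<longleftrightarrow> (\<exists>f. bij_betw f X Y \<and> (\<forall>x\<in>X. \<forall>x'\<in>X. dY (f x) (f x') = dX x x'))"

end

theory Submission
  imports Defs
begin


lemma dGH_upper:
  fixes X :: "'x set" and Y :: "'y set"
  assumes MX: "Metric_space X dX" and MY: "Metric_space Y dY"
    and sur: "\<phi> ` Y = X"
    and dis: "\<forall>y\<in>Y. \<forall>y'\<in>Y. \<bar>dX (\<phi> y) (\<phi> y') - dY y y'\<bar> \<le> 2*h"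
    and hpos: "h > 0"
  shows "dGH X dX Y dY \<le> ereal h"
proof -
  define g where "g x y = (INF y'\<in>Y. dX x (\<phi> y') + dY y' y)" for x y
  have nX: "0 \<le> dX a b" for a b by (rule Metric_space.nonneg[OF MX])
  have nY: "0 \<le> dY a b" for a b by (rule Metric_space.nonneg[OF MY])
  have cX: "dX a b = dX b a" for a b by (rule Metric_space.commute[OF MX])
  have cY: "dY a b = dY b a" for a b by (rule Metric_space.commute[OF MY])
  have tX: "dX a c \<le> dX a b + dX b c" if "a\<in>X" "b\<in>X" "c\<in>X" for a b c
    by (rule Metric_space.triangle[OF MX that])
  have tY: "dY a c \<le> dY a b + dY b c" if "a\<in>Y" "b\<in>Y" "c\<in>Y" for a b c
    by (rule Metric_space.triangle[OF MY that])
  have zX: "dX a a = 0" if "a \<in> X" for a using Metric_space.zero[OF MX that that] by simp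
  have zY: "dY a a = 0" if "a \<in> Y" for a using Metric_space.zero[OF MY that that] by simp
  have phiX: "\<phi> y \<in> X" if "y \<in> Y" for y using sur that by blast
  have g1: "g x y \<le> dX x (\<phi> y') + dY y' y" if "y' \<in> Y" for x y y'
    unfolding g_def by (rule cINF_lower) (auto intro: add_nonneg_nonneg nX nY intro!: bdd_belowI2[where m=0] that)
  have g2: "c \<le> g x y" if "Y \<noteq> {}" "\<And>y'. y' \<in> Y \<Longrightarrow> c \<le> dX x (\<phi> y') + dY y' y" for x y c
    unfolding g_def using that by (intro cINF_greatest) auto
  have g3: "0 \<le> g x y" if "Y \<noteq> {}" for x y
    by (rule g2[OF that]) (simp add: add_nonneg_nonneg nX nY)
  define dZ where "dZ p q = (case p of Inl x \<Rightarrow> (case q of Inl x' \<Rightarrow> dX x x' | Inr y \<Rightarrow> h + g x y)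
      | Inr y \<Rightarrow> (case q of Inl x \<Rightarrow> h + g x y | Inr y' \<Rightarrow> dY y y'))" for p q
  show ?thesis
  proof (cases "Y = {}")
    case True
    then have "X = {}" using sur by auto
    have "Metric_space (X <+> Y) (\<lambda>_ _. 0)" using True \<open>X = {}\<close> by unfold_locales auto
    moreover have "hausdorff_dist (\<lambda>_ _. 0) (Inl ` X) (Inr ` Y) = bot"
      using True \<open>X = {}\<close> by (simp add: hausdorff_dist_def)
    ultimately have "dGH X dX Y dY \<le> bot" unfolding dGH_def
      using True \<open>X = {}\<close> by (intro INF_lower2[of "\<lambda>_ _. 0"]) auto
    then show ?thesis using order_trans bot.extremum by blast
  next
    case Yne: False
    have L2: "g x y \<le> dX x x' + g x' y" if "x\<in>X" "x'\<in>X" "y\<in>Y" for x x' y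
    proof -
      have "g x y - dX x x' \<le> g x' y"
      proof (rule g2[OF Yne])
        fix y' assume y': "y' \<in> Y"
        have "g x y \<le> dX x (\<phi> y') + dY y' y" by (rule g1[OF y'])
        also have "\<dots> \<le> dX x x' + dX x' (\<phi> y') + dY y' y" using tX[OF that(1,2) phiX[OF y']] by simp
        finally show "g x y - dX x x' \<le> dX x' (\<phi> y') + dY y' y" by simp
      qed
      then show ?thesis by simp
    qed
    have L5: "g x y' \<le> g x y + dY y y'" if "x\<in>X" "y\<in>Y" "y'\<in>Y" for x y y'
    proof -
      have "g x y' - dY y y' \<le> g x y"
      proof (rule g2[OF Yne])
        fix y1 assume y1: "y1 \<in> Y"
        have "g x y' \<le> dX x (\<phi> y1) + dY y1 y'" by (rule g1[OF y1])
        also have "\<dots> \<le> dX x (\<phi> y1) + dY y1 y + dY y y'" using tY[OF y1 that(2,3)] by simp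
        finally show "g x y' - dY y y' \<le> dX x (\<phi> y1) + dY y1 y" by simp
      qed
      then show ?thesis by simp
    qed
    have L3: "dX x x' \<le> 2*h + g x y + g x' y" if "x\<in>X" "x'\<in>X" "y\<in>Y" for x x' y
    proof -
      have A: "dX x x' - 2*h - dX x (\<phi> y1) - dY y1 y \<le> g x' y" if y1: "y1 \<in> Y" for y1
      proof (rule g2[OF Yne])
        fix y2 assume y2: "y2 \<in> Y"
        have "dX x x' \<le> dX x (\<phi> y1) + dX (\<phi> y1) x'" using tX[OF \<open>x\<in>X\<close> phiX[OF y1] \<open>x'\<in>X\<close>] .
        also have "dX (\<phi> y1) x' \<le> dX (\<phi> y1) (\<phi> y2) + dX (\<phi> y2) x'" using tX[OF phiX[OF y1] phiX[OF y2] \<open>x'\<in>X\<close>] .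
        also have "dX (\<phi> y1) (\<phi> y2) \<le> dY y1 y2 + 2*h" using dis y1 y2 by force
        also have "dY y1 y2 \<le> dY y1 y + dY y y2" using tY[OF y1 \<open>y\<in>Y\<close> y2] .
        finally show "dX x x' - 2*h - dX x (\<phi> y1) - dY y1 y \<le> dX x' (\<phi> y2) + dY y2 y"
          using cX[of "\<phi> y2" x'] cY[of y y2] by simp
      qed
      have "dX x x' - 2*h - g x' y \<le> g x y"
      proof (rule g2[OF Yne])
        fix y1 assume "y1 \<in> Y" from A[OF this] show "dX x x' - 2*h - g x' y \<le> dX x (\<phi> y1) + dY y1 y" by simp
      qed
      then show ?thesis by simp
    qed
    have L4: "dY y y' \<le> 2*h + g x y + g x y'" if "x\<in>X" "y\<in>Y" "y'\<in>Y" for x y y'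
    proof -
      have A: "dY y y' - 2*h - dX x (\<phi> y1) - dY y1 y \<le> g x y'" if y1: "y1 \<in> Y" for y1
      proof (rule g2[OF Yne])
        fix y2 assume y2: "y2 \<in> Y"
        have "dY y y' \<le> dY y y1 + dY y1 y'" using tY[OF \<open>y\<in>Y\<close> y1 \<open>y'\<in>Y\<close>] .
        also have "dY y1 y' \<le> dY y1 y2 + dY y2 y'" using tY[OF y1 y2 \<open>y'\<in>Y\<close>] .
        also have "dY y1 y2 \<le> dX (\<phi> y1) (\<phi> y2) + 2*h" using dis y1 y2 by force
        also have "dX (\<phi> y1) (\<phi> y2) \<le> dX (\<phi> y1) x + dX x (\<phi> y2)" using tX[OF phiX[OF y1] \<open>x\<in>X\<close> phiX[OF y2]] .
        finally show "dY y y' - 2*h - dX x (\<phi> y1) - dY y1 y \<le> dX x (\<phi> y2) + dY y2 y'"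
          using cX[of "\<phi> y1" x] cY[of y y1] by simp
      qed
      have "dY y y' - 2*h - g x y' \<le> g x y"
      proof (rule g2[OF Yne])
        fix y1 assume "y1 \<in> Y" from A[OF this] show "dY y y' - 2*h - g x y' \<le> dX x (\<phi> y1) + dY y1 y" by simp
      qed
      then show ?thesis by simp
    qed
    have MZ: "Metric_space (X <+> Y) dZ"
    proof
      fix p q show "0 \<le> dZ p q" unfolding dZ_def using g3[OF Yne] hpos nX nY
        by (auto split: sum.splits intro: add_nonneg_nonneg)
      show "dZ p q = dZ q p" unfolding dZ_def using cX cY by (auto split: sum.splits)
    next
      fix p q assume "p \<in> X <+> Y" "q \<in> X <+> Y"
      then show "dZ p q = 0 \<longleftrightarrow> p = q"
      proof (elim PlusE)
        fix x1 x2 assume "p = Inl x1" "x1 \<in> X" "q = Inl x2" "x2 \<in> X"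
        then show ?thesis using Metric_space.zero[OF MX, of x1 x2] by (simp add: dZ_def)
      next
        fix x1 y2 assume "p = Inl x1" "x1 \<in> X" "q = Inr y2" "y2 \<in> Y"
        then show ?thesis using g3[OF Yne, of x1 y2] hpos by (simp add: dZ_def)
      next
        fix y1 x2 assume "p = Inr y1" "y1 \<in> Y" "q = Inl x2" "x2 \<in> X"
        then show ?thesis using g3[OF Yne, of x2 y1] hpos by (simp add: dZ_def)
      next
        fix y1 y2 assume "p = Inr y1" "y1 \<in> Y" "q = Inr y2" "y2 \<in> Y"
        then show ?thesis using Metric_space.zero[OF MY, of y1 y2] by (simp add: dZ_def)
      qed
    next
      fix p q w assume "p \<in> X <+> Y" "q \<in> X <+> Y" "w \<in> X <+> Y"
      then show "dZ p w \<le> dZ p q + dZ q w"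
      proof (elim PlusE)
        fix x1 x2 x3 assume "p = Inl x1" "x1 \<in> X" "q = Inl x2" "x2 \<in> X" "w = Inl x3" "x3 \<in> X"
        then show ?thesis using tX by (simp add: dZ_def)
      next
        fix x1 x2 y3 assume "p = Inl x1" "x1 \<in> X" "q = Inl x2" "x2 \<in> X" "w = Inr y3" "y3 \<in> Y"
        then show ?thesis using L2[of x1 x2 y3] by (simp add: dZ_def)
      next
        fix x1 y2 x3 assume "p = Inl x1" "x1 \<in> X" "q = Inr y2" "y2 \<in> Y" "w = Inl x3" "x3 \<in> X"
        then show ?thesis using L3[of x1 x3 y2] by (simp add: dZ_def)
      next
        fix x1 y2 y3 assume "p = Inl x1" "x1 \<in> X" "q = Inr y2" "y2 \<in> Y" "w = Inr y3" "y3 \<in> Y"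
        then show ?thesis using L5[of x1 y2 y3] by (simp add: dZ_def)
      next
        fix y1 x2 x3 assume "p = Inr y1" "y1 \<in> Y" "q = Inl x2" "x2 \<in> X" "w = Inl x3" "x3 \<in> X"
        then show ?thesis using L2[of x3 x2 y1] cX[of x3 x2] by (simp add: dZ_def)
      next
        fix y1 x2 y3 assume "p = Inr y1" "y1 \<in> Y" "q = Inl x2" "x2 \<in> X" "w = Inr y3" "y3 \<in> Y"
        then show ?thesis using L4[of x2 y1 y3] by (simp add: dZ_def)
      next
        fix y1 y2 x3 assume "p = Inr y1" "y1 \<in> Y" "q = Inr y2" "y2 \<in> Y" "w = Inl x3" "x3 \<in> X"
        then show ?thesis using L5[of x3 y2 y1] cY[of y1 y2] by (simp add: dZ_def)
      next
        fix y1 y2 y3 assume "p = Inr y1" "y1 \<in> Y" "q = Inr y2" "y2 \<in> Y" "w = Inr y3" "y3 \<in> Y"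
        then show ?thesis using tY by (simp add: dZ_def)
      qed
    qed
    have H: "hausdorff_dist dZ (Inl ` X) (Inr ` Y) \<le> ereal h"
    proof -
      have "(INF b\<in>Inr ` Y. ereal (dZ a b)) \<le> ereal h" if aa: "a \<in> Inl ` X" for a
      proof -
        obtain x where x: "a = Inl x" "x \<in> X" using aa by auto
        then obtain y where y: "y \<in> Y" "\<phi> y = x" using sur by auto
        have "g x y \<le> 0" using g1[OF y(1), of x y] zX[OF x(2)] zY[OF y(1)] y by simp
        then show ?thesis using x y by (intro INF_lower2[of "Inr y"]) (auto simp: dZ_def)
      qed
      moreover have "(INF a\<in>Inl ` X. ereal (dZ a b)) \<le> ereal h" if bb: "b \<in> Inr ` Y" for b
      proof -
        obtain y where y: "b = Inr y" "y \<in> Y" using bb by auto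
        have "g (\<phi> y) y \<le> 0" using g1[OF y(2), of "\<phi> y" y] zX[OF phiX[OF y(2)]] zY[OF y(2)] by simp
        then show ?thesis using y phiX[OF y(2)] by (intro INF_lower2[of "Inl (\<phi> y)"]) (auto simp: dZ_def)
      qed
      ultimately show ?thesis unfolding hausdorff_dist_def by (auto intro!: SUP_least)
    qed
    have "dZ (Inl x) (Inl x') = dX x x'" "dZ (Inr y) (Inr y') = dY y y'" for x x' y y'
      by (auto simp: dZ_def)
    then have "dGH X dX Y dY \<le> hausdorff_dist dZ (Inl ` X) (Inr ` Y)"
      unfolding dGH_def using MZ by (intro INF_lower) auto
    then show ?thesis using H by simp
  qed
qed




lemma dGH_sym_le:
  fixes X :: "'x set" and Y :: "'y set"
  shows "dGH Y dY X dX \<le> dGH X dX Y dY"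
  unfolding dGH_def
proof (rule INF_greatest)
  fix dZ assume dZ: "dZ \<in> {dZ. Metric_space (X <+> Y) dZ \<and>
        (\<forall>x\<in>X. \<forall>x'\<in>X. dZ (Inl x) (Inl x') = dX x x') \<and>
        (\<forall>y\<in>Y. \<forall>y'\<in>Y. dZ (Inr y) (Inr y') = dY y y')}"
  define sw :: "'y + 'x \<Rightarrow> 'x + 'y" where "sw = case_sum Inr Inl"
  define dW where "dW p q = dZ (sw p) (sw q)" for p q
  have MZ: "Metric_space (X <+> Y) dZ" using dZ by blast
  have swin: "sw p \<in> X <+> Y" if "p \<in> Y <+> X" for p using that by (auto simp: sw_def)
  have swinj: "sw p = sw q \<longleftrightarrow> p = q" for p q by (auto simp: sw_def split: sum.splits)
  have MW: "Metric_space (Y <+> X) dW"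
  proof
    fix p q show "0 \<le> dW p q" unfolding dW_def by (rule Metric_space.nonneg[OF MZ])
    show "dW p q = dW q p" unfolding dW_def by (rule Metric_space.commute[OF MZ])
  next
    fix p q assume p: "p \<in> Y <+> X" and q: "q \<in> Y <+> X"
    have "dZ (sw p) (sw q) = 0 \<longleftrightarrow> sw p = sw q" using Metric_space.zero[OF MZ swin[OF p] swin[OF q]] .
    then show "dW p q = 0 \<longleftrightarrow> p = q" unfolding dW_def using swinj by simp
  next
    fix p q w assume p: "p \<in> Y <+> X" and q: "q \<in> Y <+> X" and w: "w \<in> Y <+> X"
    show "dW p w \<le> dW p q + dW q w" unfolding dW_def
      by (rule Metric_space.triangle[OF MZ swin[OF p] swin[OF q] swin[OF w]])
  qed
  have c: "dZ a b = dZ b a" for a b by (rule Metric_space.commute[OF MZ])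
  have "hausdorff_dist dW (Inl ` Y) (Inr ` X) = hausdorff_dist dZ (Inl ` X) (Inr ` Y)"
    unfolding hausdorff_dist_def dW_def sw_def by (simp add: image_image c max.commute)
  moreover have "dW \<in> {dZ. Metric_space (Y <+> X) dZ \<and>
        (\<forall>x\<in>Y. \<forall>x'\<in>Y. dZ (Inl x) (Inl x') = dY x x') \<and>
        (\<forall>y\<in>X. \<forall>y'\<in>X. dZ (Inr y) (Inr y') = dX y y')}"
    using MW dZ by (simp add: dW_def sw_def)
  ultimately show "(INF dZ\<in>{dZ. Metric_space (Y <+> X) dZ \<and>
        (\<forall>x\<in>Y. \<forall>x'\<in>Y. dZ (Inl x) (Inl x') = dY x x') \<and>
        (\<forall>y\<in>X. \<forall>y'\<in>X. dZ (Inr y) (Inr y') = dX y y')}. hausdorff_dist dZ (Inl ` Y) (Inr ` X))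
     \<le> hausdorff_dist dZ (Inl ` X) (Inr ` Y)"
    by (intro INF_lower2[of dW]) simp_all
qed

lemma dGH_sym: "dGH Y dY X dX = dGH X dX Y dY"
  by (simp add: antisym dGH_sym_le)

lemma dGH_corr:
  fixes X :: "'x set" and Y :: "'y set"
  assumes MX: "Metric_space X dX" and MY: "Metric_space Y dY"
    and lt: "dGH X dX Y dY < ereal h"
    and sep: "\<forall>x\<in>X. \<forall>x'\<in>X. x \<noteq> x' \<longrightarrow> dX x x' > 2*h"
  shows "\<exists>\<phi>. \<phi> ` Y = X \<and> (\<forall>y\<in>Y. \<forall>y'\<in>Y. \<bar>dX (\<phi> y) (\<phi> y') - dY y y'\<bar> \<le> 2*h)"
proof -
  obtain dZ where MZ: "Metric_space (X <+> Y) dZ"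
    and eX: "\<forall>x\<in>X. \<forall>x'\<in>X. dZ (Inl x) (Inl x') = dX x x'"
    and eY: "\<forall>y\<in>Y. \<forall>y'\<in>Y. dZ (Inr y) (Inr y') = dY y y'"
    and H: "hausdorff_dist dZ (Inl ` X) (Inr ` Y) < ereal h"
    using lt unfolding dGH_def by (auto simp: INF_less_iff)
  have A: "\<exists>y\<in>Y. dZ (Inl x) (Inr y) < h" if "x \<in> X" for x
  proof -
    have "(SUP a\<in>Inl ` X. INF b\<in>Inr ` Y. ereal (dZ a b)) < ereal h"
      using H unfolding hausdorff_dist_def by simp
    then have "(INF b\<in>Inr ` Y. ereal (dZ (Inl x) b)) < ereal h"
      by (rule SUP_lessD) (use that in auto)
    then show ?thesis by (auto simp: INF_less_iff)
  qed
  have B: "\<exists>x\<in>X. dZ (Inl x) (Inr y) < h" if "y \<in> Y" for y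
  proof -
    have "(SUP b\<in>Inr ` Y. INF a\<in>Inl ` X. ereal (dZ a b)) < ereal h"
      using H unfolding hausdorff_dist_def by simp
    then have "(INF a\<in>Inl ` X. ereal (dZ a (Inr y))) < ereal h"
      by (rule SUP_lessD) (use that in auto)
    then show ?thesis by (auto simp: INF_less_iff)
  qed
  define \<phi> where "\<phi> y = (SOME x. x \<in> X \<and> dZ (Inl x) (Inr y) < h)" for y
  have phi: "\<phi> y \<in> X \<and> dZ (Inl (\<phi> y)) (Inr y) < h" if "y \<in> Y" for y
    unfolding \<phi>_def using B[OF that] by (rule someI2_bex) auto
  have c: "dZ a b = dZ b a" for a b by (rule Metric_space.commute[OF MZ])
  have t: "dZ a c \<le> dZ a b + dZ b c" if "a \<in> X <+> Y" "b \<in> X <+> Y" "c \<in> X <+> Y" for a b c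
    by (rule Metric_space.triangle[OF MZ that])
  have dis: "\<bar>dX (\<phi> y) (\<phi> y') - dY y y'\<bar> \<le> 2*h" if "y \<in> Y" "y' \<in> Y" for y y'
  proof -
    have p1: "\<phi> y \<in> X" "dZ (Inl (\<phi> y)) (Inr y) < h" using phi[OF that(1)] by auto
    have p2: "\<phi> y' \<in> X" "dZ (Inl (\<phi> y')) (Inr y') < h" using phi[OF that(2)] by auto
    have "dZ (Inl (\<phi> y)) (Inl (\<phi> y')) \<le> dZ (Inl (\<phi> y)) (Inr y) + dZ (Inr y) (Inl (\<phi> y'))"
      using t p1 p2 that by blast
    moreover have "dZ (Inr y) (Inl (\<phi> y')) \<le> dZ (Inr y) (Inr y') + dZ (Inr y') (Inl (\<phi> y'))"
      using t p1 p2 that by blast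
    moreover have "dZ (Inr y) (Inr y') \<le> dZ (Inr y) (Inl (\<phi> y)) + dZ (Inl (\<phi> y)) (Inr y')"
      using t p1 p2 that by blast
    moreover have "dZ (Inl (\<phi> y)) (Inr y') \<le> dZ (Inl (\<phi> y)) (Inl (\<phi> y')) + dZ (Inl (\<phi> y')) (Inr y')"
      using t p1 p2 that by blast
    ultimately show ?thesis using eX eY p1 p2 that c[of "Inr y" "Inl (\<phi> y)"] c[of "Inr y'" "Inl (\<phi> y')"]
      by (simp add: abs_le_iff)
  qed
  have "\<phi> ` Y = X"
  proof
    show "\<phi> ` Y \<subseteq> X" using phi by auto
    show "X \<subseteq> \<phi> ` Y"
    proof
      fix x assume x: "x \<in> X"
      then obtain y where y: "y \<in> Y" "dZ (Inl x) (Inr y) < h" using A by blast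
      have p: "\<phi> y \<in> X" "dZ (Inl (\<phi> y)) (Inr y) < h" using phi[OF y(1)] by auto
      have "dZ (Inl x) (Inl (\<phi> y)) \<le> dZ (Inl x) (Inr y) + dZ (Inr y) (Inl (\<phi> y))"
        using t x y p by blast
      then have "dX x (\<phi> y) \<le> 2*h" using eX x p y c[of "Inr y" "Inl (\<phi> y)"] by simp
      then have "x = \<phi> y" using sep x p by force
      then show "x \<in> \<phi> ` Y" using y by blast
    qed
  qed
  then show ?thesis using dis by blast
qed




lemma dGH_unique:
  fixes M :: "'m set" and X :: "'x set"
  assumes MM: "Metric_space M dM"
    and sepL: "\<forall>m\<in>M. \<forall>m'\<in>M. m \<noteq> m' \<longrightarrow> dM m m' > L"
    and eL: "\<forall>\<sigma>. bij_betw \<sigma> M M \<and> (\<exists>x\<in>M. \<sigma> x \<noteq> x) \<longrightarrow> distortion M dM \<sigma> > ereal L"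
    and sphi: "\<phi> ` X = M" and spsi: "\<psi> ` X = M"
    and dphi: "\<forall>x\<in>X. \<forall>x'\<in>X. \<bar>dM (\<phi> x) (\<phi> x') - \<rho> x x'\<bar> \<le> a"
    and dpsi: "\<forall>x\<in>X. \<forall>x'\<in>X. \<bar>dM (\<psi> x) (\<psi> x') - \<rho> x x'\<bar> \<le> b"
    and ab: "a + b \<le> L"
  shows "\<forall>x\<in>X. \<phi> x = \<psi> x"
proof -
  have K: "\<bar>dM (\<phi> x) (\<phi> x') - dM (\<psi> x) (\<psi> x')\<bar> \<le> L" if "x \<in> X" "x' \<in> X" for x x'
    using dphi dpsi that ab by (smt (verit, best))
  have eq: "m = m'" if "m \<in> M" "m' \<in> M" "dM m m' \<le> L" for m m'
    using sepL that by force
  have z: "dM m m = 0" if "m \<in> M" for m using Metric_space.zero[OF MM that that] by simp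
  define \<sigma> where "\<sigma> m = \<psi> (SOME x. x \<in> X \<and> \<phi> x = m)" for m
  have sx: "(SOME x'. x' \<in> X \<and> \<phi> x' = m) \<in> X \<and> \<phi> (SOME x'. x' \<in> X \<and> \<phi> x' = m) = m" if mM: "m \<in> M" for m
  proof -
    obtain x where "x \<in> X" "\<phi> x = m" using sphi mM by blast
    then show ?thesis using someI[of "\<lambda>x'. x' \<in> X \<and> \<phi> x' = m" x] by blast
  qed
  have sig: "\<sigma> (\<phi> x) = \<psi> x" if x: "x \<in> X" for x
  proof -
    define x' where "x' = (SOME x'. x' \<in> X \<and> \<phi> x' = \<phi> x)"
    have x': "x' \<in> X" "\<phi> x' = \<phi> x" using sx[of "\<phi> x"] x sphi unfolding x'_def by auto
    have "dM (\<psi> x') (\<psi> x) \<le> L" using K[OF x' (1) x] x' z[of "\<phi> x"] x sphi by auto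
    then have "\<psi> x' = \<psi> x" using eq spsi x x'(1) by blast
    then show ?thesis unfolding \<sigma>_def x'_def[symmetric] .
  qed
  have allM: "\<exists>x\<in>X. m = \<phi> x" if "m \<in> M" for m using sphi that by blast
  have bij: "bij_betw \<sigma> M M"
  proof (rule bij_betw_imageI)
    show "inj_on \<sigma> M"
    proof
      fix i j assume "i \<in> M" "j \<in> M" "\<sigma> i = \<sigma> j"
      then obtain x x' where xx: "x \<in> X" "x' \<in> X" "i = \<phi> x" "j = \<phi> x'" "\<psi> x = \<psi> x'"
        using allM sig by metis
      then have "dM (\<phi> x) (\<phi> x') \<le> L" using K[OF xx(1,2)] z[of "\<psi> x'"] spsi by auto
      then show "i = j" using eq xx sphi by blast
    qed
    show "\<sigma> ` M = M"
    proof
      show "\<sigma> ` M \<subseteq> M" using allM sig spsi by force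
      show "M \<subseteq> \<sigma> ` M"
      proof
        fix m assume "m \<in> M" then obtain x where "x \<in> X" "m = \<psi> x" using spsi by blast
        then show "m \<in> \<sigma> ` M" using sig sphi by force
      qed
    qed
  qed
  have "distortion M dM \<sigma> \<le> ereal L" unfolding distortion_def
  proof (rule SUP_least)
    fix p assume p: "p \<in> M \<times> M"
    obtain x where x: "x \<in> X" "fst p = \<phi> x" using allM[of "fst p"] p by auto
    obtain x' where x': "x' \<in> X" "snd p = \<phi> x'" using allM[of "snd p"] p by auto
    note xx = x(1) x'(1) x(2) x'(2)
    show "ereal \<bar>dM (fst p) (snd p) - dM (\<sigma> (fst p)) (\<sigma> (snd p))\<bar> \<le> ereal L"
      using K[OF xx(1,2)] xx sig by simp
  qed
  then have "\<not> (\<exists>x\<in>M. \<sigma> x \<noteq> x)" using eL bij by (meson not_le)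
  then show ?thesis using sig sphi by force
qed




locale gh_construct =
  fixes M :: "'m set" and dM :: "'m \<Rightarrow> 'm \<Rightarrow> real"
    and Y1 :: "'a set" and d1 :: "'a \<Rightarrow> 'a \<Rightarrow> real"
    and Y2 :: "'b set" and d2 :: "'b \<Rightarrow> 'b \<Rightarrow> real"
    and r :: real and L :: real
    and idx1 :: "'a \<Rightarrow> 'm" and idx2 :: "'b \<Rightarrow> 'm"
    and e1 :: "'a \<Rightarrow> 'c" and e2 :: "'b \<Rightarrow> 'c"
  assumes MM: "Metric_space M dM" and M1: "Metric_space Y1 d1" and M2: "Metric_space Y2 d2"
    and rpos: "0 < r" and L4: "4*r \<le> L"
    and sepL: "\<forall>m\<in>M. \<forall>m'\<in>M. m \<noteq> m' \<longrightarrow> dM m m' > L"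
    and eL: "\<forall>\<sigma>. bij_betw \<sigma> M M \<and> (\<exists>x\<in>M. \<sigma> x \<noteq> x) \<longrightarrow> distortion M dM \<sigma> > ereal L"
    and tri: "\<forall>x\<in>M. \<forall>y\<in>M. \<forall>z\<in>M. x \<noteq> y \<and> y \<noteq> z \<and> x \<noteq> z \<longrightarrow> dM x y + dM y z - dM x z > 2*r"
    and i1: "idx1 ` Y1 = M" and dis1: "\<forall>a\<in>Y1. \<forall>a'\<in>Y1. \<bar>dM (idx1 a) (idx1 a') - d1 a a'\<bar> \<le> 2*r"
    and i2: "idx2 ` Y2 = M" and dis2: "\<forall>a\<in>Y2. \<forall>a'\<in>Y2. \<bar>dM (idx2 a) (idx2 a') - d2 a a'\<bar> \<le> 2*r"
    and gh1: "dGH M dM Y1 d1 = ereal r" and gh2: "dGH M dM Y2 d2 = ereal r"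
    and inj1: "inj_on e1 Y1" and inj2: "inj_on e2 Y2" and disj: "e1 ` Y1 \<inter> e2 ` Y2 = {}"
begin

lemma dMz: "m \<in> M \<Longrightarrow> dM m m = 0" using Metric_space.zero[OF MM] by simp
lemma dMc: "dM a b = dM b a" by (rule Metric_space.commute[OF MM])
lemma dMn: "0 \<le> dM a b" by (rule Metric_space.nonneg[OF MM])
lemma dMsep: "m \<in> M \<Longrightarrow> m' \<in> M \<Longrightarrow> m \<noteq> m' \<Longrightarrow> dM m m' > 4*r" using sepL L4 by force

definition k :: "'m \<Rightarrow> 'm \<Rightarrow> real" where "k i j = (if i = j then 2*r else dM i j)"

lemma k_sym: "k i j = k j i" unfolding k_def using dMc by auto

lemma real1: (* x,z same side, y other *)
  assumes "i \<in> M" "j \<in> M" "l \<in> M" "c \<le> dM i l + 2*r"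
  shows "c \<le> k i j + k j l"
proof -
  consider "i = j" "j = l" | "i = l" "i \<noteq> j" | "i = j" "j \<noteq> l" | "j = l" "i \<noteq> j" | "i \<noteq> j" "j \<noteq> l" "i \<noteq> l" by blast
  then show ?thesis
  proof cases
    case 1 then show ?thesis using assms dMz rpos unfolding k_def by auto
  next
    case 2 then show ?thesis using assms dMz dMsep[of i j] dMc[of j i] rpos unfolding k_def by auto
  next
    case 3 then show ?thesis using assms unfolding k_def by auto
  next
    case 4 then show ?thesis using assms unfolding k_def by auto
  next
    case 5 then show ?thesis using assms tri unfolding k_def by force
  qed
qed

lemma real2: (* x,y same side, z other *)
  assumes "i \<in> M" "j \<in> M" "l \<in> M" "0 \<le> a" "dM i j - 2*r \<le> a"
  shows "k i l \<le> a + k j l"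
proof -
  consider "i = l" "j = l" | "i = l" "j \<noteq> l" | "i \<noteq> l" "j = l" | "i \<noteq> l" "j = i" | "i \<noteq> l" "j \<noteq> l" "i \<noteq> j" by blast
  then show ?thesis
  proof cases
    case 1 then show ?thesis using assms unfolding k_def by auto
  next
    case 2 then show ?thesis using assms dMsep[of j l] rpos unfolding k_def by auto
  next
    case 3 then show ?thesis using assms unfolding k_def by auto
  next
    case 4 then show ?thesis using assms unfolding k_def by auto
  next
    case 5 then show ?thesis using assms tri dMc[of i j] unfolding k_def by force
  qed
qed

definition "U1 = e1 ` Y1"
definition "U2 = e2 ` Y2"
definition "T = U1 \<union> U2"
definition "p1 = inv_into Y1 e1"
definition "p2 = inv_into Y2 e2"
definition "f c = (SOME a. a \<in> Y1 \<and> idx1 a = idx2 c)" for c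
definition "h c = (SOME a. a \<in> Y2 \<and> idx2 a = idx1 c)" for c
definition "P c = (if c \<in> U1 then p1 c else f (p2 c))" for c
definition "Q c = (if c \<in> U2 then p2 c else h (p1 c))" for c
definition "I c = (if c \<in> U1 then idx1 (p1 c) else idx2 (p2 c))" for c
definition "D1 c c' = d1 (P c) (P c')" for c c'
definition "D2 c c' = d2 (Q c) (Q c')" for c c'
definition "DZ c c' = (if c \<in> U1 \<and> c' \<in> U1 then d1 (p1 c) (p1 c')
    else if c \<notin> U1 \<and> c' \<notin> U1 then d2 (p2 c) (p2 c') else k (I c) (I c'))" for c c'
definition "al t = max 0 (1 - t)" for t :: real
definition "ga t = max 0 (t - 1)" for t :: real
definition "be t = 1 - al t - ga t" for t :: real
definition "rho t c c' = al t * D1 c c' + be t * DZ c c' + ga t * D2 c c'" for t c c'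

lemma f_prop: "b \<in> Y2 \<Longrightarrow> f b \<in> Y1 \<and> idx1 (f b) = idx2 b"
proof -
  assume b: "b \<in> Y2"
  then obtain a where "a \<in> Y1" "idx1 a = idx2 b" using i1 i2 by (metis image_eqI imageE)
  then show ?thesis unfolding f_def using someI[of "\<lambda>a. a \<in> Y1 \<and> idx1 a = idx2 b" a] by blast
qed

lemma h_prop: "a \<in> Y1 \<Longrightarrow> h a \<in> Y2 \<and> idx2 (h a) = idx1 a"
proof -
  assume a: "a \<in> Y1"
  then obtain b where "b \<in> Y2" "idx2 b = idx1 a" using i1 i2 by (metis image_eqI imageE)
  then show ?thesis unfolding h_def using someI[of "\<lambda>b. b \<in> Y2 \<and> idx2 b = idx1 a" b] by blast
qed

lemma p1_in: "c \<in> U1 \<Longrightarrow> p1 c \<in> Y1" unfolding U1_def p1_def by (auto intro: inv_into_into)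
lemma p2_in: "c \<in> U2 \<Longrightarrow> p2 c \<in> Y2" unfolding U2_def p2_def by (auto intro: inv_into_into)
lemma p1_e1: "a \<in> Y1 \<Longrightarrow> p1 (e1 a) = a" unfolding p1_def using inj1 by simp
lemma p2_e2: "a \<in> Y2 \<Longrightarrow> p2 (e2 a) = a" unfolding p2_def using inj2 by simp
lemma e1_p1: "c \<in> U1 \<Longrightarrow> e1 (p1 c) = c" unfolding p1_def U1_def by (auto intro: f_inv_into_f)
lemma e2_p2: "c \<in> U2 \<Longrightarrow> e2 (p2 c) = c" unfolding p2_def U2_def by (auto intro: f_inv_into_f)
lemma U2_not_U1: "c \<in> U2 \<Longrightarrow> c \<notin> U1" using disj unfolding U1_def U2_def by blast
lemma T_cases: "c \<in> T \<Longrightarrow> (c \<in> U1 \<Longrightarrow> R) \<Longrightarrow> (c \<in> U2 \<Longrightarrow> c \<notin> U1 \<Longrightarrow> R) \<Longrightarrow> R"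
  unfolding T_def using U2_not_U1 by blast

lemma P_in: "c \<in> T \<Longrightarrow> P c \<in> Y1 \<and> idx1 (P c) = I c"
  by (erule T_cases) (auto simp: P_def I_def p1_in p2_in f_prop)
lemma Q_in: "c \<in> T \<Longrightarrow> Q c \<in> Y2 \<and> idx2 (Q c) = I c"
  by (erule T_cases) (auto simp: Q_def I_def p1_in p2_in h_prop U2_not_U1)
lemma I_in: "c \<in> T \<Longrightarrow> I c \<in> M" using P_in i1 by (metis image_eqI)

lemma I_U1: "I ` U1 = M"
proof -
  have "I ` U1 = idx1 ` p1 ` U1" by (auto simp: I_def image_image)
  also have "p1 ` U1 = Y1" unfolding U1_def using p1_e1 by (force simp: image_image)
  finally show ?thesis using i1 by simp
qed
lemma I_U2: "I ` U2 = M"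
proof -
  have "I ` U2 = idx2 ` p2 ` U2" using U2_not_U1 by (auto simp: I_def image_image)
  also have "p2 ` U2 = Y2" unfolding U2_def using p2_e2 by (force simp: image_image)
  finally show ?thesis using i2 by simp
qed
lemma I_T: "I ` T = M" using I_U1 I_in unfolding T_def by blast

lemma D1_bd: "c \<in> T \<Longrightarrow> c' \<in> T \<Longrightarrow> \<bar>D1 c c' - dM (I c) (I c')\<bar> \<le> 2*r"
  using dis1 P_in unfolding D1_def by (metis abs_minus_commute)
lemma D2_bd: "c \<in> T \<Longrightarrow> c' \<in> T \<Longrightarrow> \<bar>D2 c c' - dM (I c) (I c')\<bar> \<le> 2*r"
  using dis2 Q_in unfolding D2_def by (metis abs_minus_commute)
lemma DZ_bd: "c \<in> T \<Longrightarrow> c' \<in> T \<Longrightarrow> \<bar>DZ c c' - dM (I c) (I c')\<bar> \<le> 2*r"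
proof -
  assume c: "c \<in> T" and c': "c' \<in> T"
  show ?thesis
  proof (cases "c \<in> U1 \<and> c' \<in> U1")
    case True
    then have "p1 c \<in> Y1" "p1 c' \<in> Y1" using p1_in by auto
    then have "\<bar>dM (idx1 (p1 c)) (idx1 (p1 c')) - d1 (p1 c) (p1 c')\<bar> \<le> 2*r" using dis1 by blast
    then show ?thesis using True unfolding DZ_def I_def by (simp add: abs_minus_commute)
  next
    case F1: False
    show ?thesis
    proof (cases "c \<notin> U1 \<and> c' \<notin> U1")
      case True
      then have "c \<in> U2" "c' \<in> U2" using c c' unfolding T_def by auto
      then have "p2 c \<in> Y2" "p2 c' \<in> Y2" using p2_in by auto
      then have "\<bar>dM (idx2 (p2 c)) (idx2 (p2 c')) - d2 (p2 c) (p2 c')\<bar> \<le> 2*r" using dis2 by blast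
      then show ?thesis using True unfolding DZ_def I_def by (simp add: abs_minus_commute)
    next
      case False
      then show ?thesis using F1 rpos dMz[OF I_in[OF c]] unfolding DZ_def k_def by auto
    qed
  qed
qed

lemma D1_U1: "c \<in> U1 \<Longrightarrow> c' \<in> U1 \<Longrightarrow> D1 c c' = d1 (p1 c) (p1 c')" by (simp add: D1_def P_def)
lemma D2_U2: "c \<in> U2 \<Longrightarrow> c' \<in> U2 \<Longrightarrow> D2 c c' = d2 (p2 c) (p2 c')" by (simp add: D2_def Q_def)
lemma DZ_U1: "c \<in> U1 \<Longrightarrow> c' \<in> U1 \<Longrightarrow> DZ c c' = d1 (p1 c) (p1 c')" by (simp add: DZ_def)
lemma DZ_U2: "c \<in> U2 \<Longrightarrow> c' \<in> U2 \<Longrightarrow> DZ c c' = d2 (p2 c) (p2 c')" using U2_not_U1 by (simp add: DZ_def)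

end



lemma abs3:
  fixes a b c x y z :: real
  assumes "0 \<le> a" "0 \<le> b" "0 \<le> c"
  shows "\<bar>a*x + b*y + c*z\<bar> \<le> a*\<bar>x\<bar> + b*\<bar>y\<bar> + c*\<bar>z\<bar>"
proof -
  have "\<bar>a*x + b*y + c*z\<bar> \<le> \<bar>a*x + b*y\<bar> + \<bar>c*z\<bar>" by (rule abs_triangle_ineq)
  moreover have "\<bar>a*x + b*y\<bar> \<le> \<bar>a*x\<bar> + \<bar>b*y\<bar>" by (rule abs_triangle_ineq)
  ultimately show ?thesis using assms by (simp add: abs_mult)
qed

lemma EE_gen:
  fixes a b c E :: real
  assumes "a + b + c = 1"
  shows "a * E + b * E + c * E = E"
proof -
  have "a * E + b * E + c * E = (a + b + c) * E" by (simp add: algebra_simps)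
  then show ?thesis using assms by simp
qed

context gh_construct begin

lemma d1n: "0 \<le> d1 a b" by (rule Metric_space.nonneg[OF M1])
lemma d2n: "0 \<le> d2 a b" by (rule Metric_space.nonneg[OF M2])
lemma d1c: "d1 a b = d1 b a" by (rule Metric_space.commute[OF M1])
lemma d2c: "d2 a b = d2 b a" by (rule Metric_space.commute[OF M2])
lemma d1z: "a \<in> Y1 \<Longrightarrow> b \<in> Y1 \<Longrightarrow> d1 a b = 0 \<longleftrightarrow> a = b" by (rule Metric_space.zero[OF M1])
lemma d2z: "a \<in> Y2 \<Longrightarrow> b \<in> Y2 \<Longrightarrow> d2 a b = 0 \<longleftrightarrow> a = b" by (rule Metric_space.zero[OF M2])
lemma d1t: "a \<in> Y1 \<Longrightarrow> b \<in> Y1 \<Longrightarrow> c \<in> Y1 \<Longrightarrow> d1 a c \<le> d1 a b + d1 b c" by (rule Metric_space.triangle[OF M1])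
lemma d2t: "a \<in> Y2 \<Longrightarrow> b \<in> Y2 \<Longrightarrow> c \<in> Y2 \<Longrightarrow> d2 a c \<le> d2 a b + d2 b c" by (rule Metric_space.triangle[OF M2])
lemma k_pos: "i \<in> M \<Longrightarrow> j \<in> M \<Longrightarrow> 0 < k i j"
  unfolding k_def using rpos dMsep[of i j] by auto

lemma DZ_mixed: "c \<in> T \<Longrightarrow> c' \<in> T \<Longrightarrow> (c \<in> U1) \<noteq> (c' \<in> U1) \<Longrightarrow> DZ c c' = k (I c) (I c')"
  unfolding DZ_def by auto

lemma DZ_n: "0 \<le> DZ c c'" unfolding DZ_def k_def using d1n d2n dMn rpos by auto
lemma DZ_c: "DZ c c' = DZ c' c" unfolding DZ_def using d1c d2c k_sym by auto

lemma DZ_lower: "c \<in> T \<Longrightarrow> c' \<in> T \<Longrightarrow> dM (I c) (I c') - 2*r \<le> DZ c c'"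
  using DZ_bd[of c c'] by (simp add: abs_le_iff)
lemma DZ_upper: "c \<in> T \<Longrightarrow> c' \<in> T \<Longrightarrow> DZ c c' \<le> dM (I c) (I c') + 2*r"
  using DZ_bd[of c c'] by (simp add: abs_le_iff)

lemma DZ_metric: "Metric_space T DZ"
proof
  fix x y show "0 \<le> DZ x y" by (rule DZ_n)
  show "DZ x y = DZ y x" by (rule DZ_c)
next
  fix x y assume x: "x \<in> T" and y: "y \<in> T"
  show "DZ x y = 0 \<longleftrightarrow> x = y"
  proof (cases "x \<in> U1 \<and> y \<in> U1")
    case True
    then have "DZ x y = d1 (p1 x) (p1 y)" by (simp add: DZ_U1)
    moreover have "d1 (p1 x) (p1 y) = 0 \<longleftrightarrow> p1 x = p1 y" using True by (intro d1z p1_in) auto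
    moreover have "p1 x = p1 y \<longleftrightarrow> x = y" using True e1_p1 by metis
    ultimately show ?thesis by simp
  next
    case F: False
    show ?thesis
    proof (cases "x \<notin> U1 \<and> y \<notin> U1")
      case True
      then have "x \<in> U2" "y \<in> U2" using x y unfolding T_def by auto
      then have "DZ x y = d2 (p2 x) (p2 y)" by (simp add: DZ_U2)
      moreover have "d2 (p2 x) (p2 y) = 0 \<longleftrightarrow> p2 x = p2 y" using \<open>x \<in> U2\<close> \<open>y \<in> U2\<close> by (intro d2z p2_in) auto
      moreover have "p2 x = p2 y \<longleftrightarrow> x = y" using \<open>x \<in> U2\<close> \<open>y \<in> U2\<close> e2_p2 by metis
      ultimately show ?thesis by simp
    next
      case False
      then have "(x \<in> U1) \<noteq> (y \<in> U1)" using F by blast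
      then show ?thesis using DZ_mixed[OF x y] k_pos[OF I_in[OF x] I_in[OF y]] by auto
    qed
  qed
next
  fix x y z assume x: "x \<in> T" and y: "y \<in> T" and z: "z \<in> T"
  have Ix: "I x \<in> M" and Iy: "I y \<in> M" and Iz: "I z \<in> M" using I_in x y z by auto
  show "DZ x z \<le> DZ x y + DZ y z"
  proof (cases "x \<in> U1 \<and> y \<in> U1 \<and> z \<in> U1")
    case True then show ?thesis using d1t[OF p1_in p1_in p1_in] by (simp add: DZ_U1)
  next
    case F1: False
    show ?thesis
    proof (cases "x \<notin> U1 \<and> y \<notin> U1 \<and> z \<notin> U1")
      case True
      then have "x \<in> U2" "y \<in> U2" "z \<in> U2" using x y z unfolding T_def by auto
      then show ?thesis using d2t[OF p2_in p2_in p2_in] by (simp add: DZ_U2)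
    next
      case F2: False
      consider "(x \<in> U1) = (z \<in> U1)" "(x \<in> U1) \<noteq> (y \<in> U1)"
        | "(x \<in> U1) = (y \<in> U1)" "(x \<in> U1) \<noteq> (z \<in> U1)"
        | "(y \<in> U1) = (z \<in> U1)" "(x \<in> U1) \<noteq> (y \<in> U1)"
        using F1 F2 by blast
      then show ?thesis
      proof cases
        case 1
        have "DZ x y = k (I x) (I y)" "DZ y z = k (I y) (I z)"
          using DZ_mixed x y z 1 by auto
        then show ?thesis using real1[OF Ix Iy Iz DZ_upper[OF x z]] by simp
      next
        case 2
        have "DZ x z = k (I x) (I z)" "DZ y z = k (I y) (I z)"
          using DZ_mixed x y z 2 by auto
        then show ?thesis using real2[OF Ix Iy Iz DZ_n DZ_lower[OF x y]] by simp
      next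
        case 3
        have "DZ x z = k (I z) (I x)" "DZ x y = k (I y) (I x)"
          using DZ_mixed x y z 3 k_sym by auto
        moreover have "dM (I z) (I y) - 2*r \<le> DZ y z" using DZ_lower[OF y z] dMc by simp
        ultimately show ?thesis using real2[OF Iz Iy Ix DZ_n, of y z] by simp
      qed
    qed
  qed
qed

lemma D1_n: "0 \<le> D1 c c'" unfolding D1_def by (rule d1n)
lemma D2_n: "0 \<le> D2 c c'" unfolding D2_def by (rule d2n)
lemma D1_c: "D1 c c' = D1 c' c" unfolding D1_def by (rule d1c)
lemma D2_c: "D2 c c' = D2 c' c" unfolding D2_def by (rule d2c)
lemma D1_z: "c \<in> T \<Longrightarrow> D1 c c = 0" unfolding D1_def using d1z P_in by blast
lemma D2_z: "c \<in> T \<Longrightarrow> D2 c c = 0" unfolding D2_def using d2z Q_in by blast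
lemma D1_t: "x \<in> T \<Longrightarrow> y \<in> T \<Longrightarrow> z \<in> T \<Longrightarrow> D1 x z \<le> D1 x y + D1 y z"
  unfolding D1_def using d1t P_in by blast
lemma D2_t: "x \<in> T \<Longrightarrow> y \<in> T \<Longrightarrow> z \<in> T \<Longrightarrow> D2 x z \<le> D2 x y + D2 y z"
  unfolding D2_def using d2t Q_in by blast

lemma U1_T: "U1 \<subseteq> T" and U2_T: "U2 \<subseteq> T" unfolding T_def by auto

lemma D1_metric: "Metric_space U1 D1"
proof
  fix x y show "0 \<le> D1 x y" by (rule D1_n)
  show "D1 x y = D1 y x" by (rule D1_c)
next
  fix x y assume xy: "x \<in> U1" "y \<in> U1"
  then have "D1 x y = d1 (p1 x) (p1 y)" by (simp add: D1_U1)
  moreover have "d1 (p1 x) (p1 y) = 0 \<longleftrightarrow> p1 x = p1 y" using xy by (intro d1z p1_in) auto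
  moreover have "p1 x = p1 y \<longleftrightarrow> x = y" using xy e1_p1 by metis
  ultimately show "D1 x y = 0 \<longleftrightarrow> x = y" by simp
next
  fix x y z assume "x \<in> U1" "y \<in> U1" "z \<in> U1"
  then show "D1 x z \<le> D1 x y + D1 y z" using D1_t U1_T by blast
qed

lemma D2_metric: "Metric_space U2 D2"
proof
  fix x y show "0 \<le> D2 x y" by (rule D2_n)
  show "D2 x y = D2 y x" by (rule D2_c)
next
  fix x y assume xy: "x \<in> U2" "y \<in> U2"
  then have "D2 x y = d2 (p2 x) (p2 y)" by (simp add: D2_U2)
  moreover have "d2 (p2 x) (p2 y) = 0 \<longleftrightarrow> p2 x = p2 y" using xy by (intro d2z p2_in) auto
  moreover have "p2 x = p2 y \<longleftrightarrow> x = y" using xy e2_p2 by metis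
  ultimately show "D2 x y = 0 \<longleftrightarrow> x = y" by simp
next
  fix x y z assume "x \<in> U2" "y \<in> U2" "z \<in> U2"
  then show "D2 x z \<le> D2 x y + D2 y z" using D2_t U2_T by blast
qed

lemma w_nonneg: "0 \<le> t \<Longrightarrow> t \<le> 2 \<Longrightarrow> 0 \<le> al t \<and> 0 \<le> be t \<and> 0 \<le> ga t \<and> al t + be t + ga t = 1"
  unfolding al_def be_def ga_def by auto
lemma be_pos: "0 < t \<Longrightarrow> t < 2 \<Longrightarrow> 0 < be t"
  unfolding al_def be_def ga_def by auto

lemma rho_metric:
  assumes "0 < t" "t < 2" shows "Metric_space T (rho t)"
proof -
  have w: "0 \<le> al t" "0 \<le> be t" "0 \<le> ga t" using w_nonneg assms by auto
  have b: "0 < be t" using be_pos assms by auto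
  show ?thesis
  proof
    fix x y show "0 \<le> rho t x y" unfolding rho_def using w D1_n D2_n DZ_n by simp
    show "rho t x y = rho t y x" unfolding rho_def using D1_c D2_c DZ_c by simp
  next
    fix x y assume x: "x \<in> T" and y: "y \<in> T"
    show "rho t x y = 0 \<longleftrightarrow> x = y"
    proof
      assume "rho t x y = 0"
      moreover have "0 \<le> al t * D1 x y" "0 \<le> be t * DZ x y" "0 \<le> ga t * D2 x y"
        using w D1_n[of x y] D2_n[of x y] DZ_n[of x y] by auto
      ultimately have "be t * DZ x y = 0" unfolding rho_def by linarith
      then have "DZ x y = 0" using b by simp
      then show "x = y" using Metric_space.zero[OF DZ_metric x y] by simp
    next
      assume "x = y" then show "rho t x y = 0" unfolding rho_def
        using D1_z D2_z Metric_space.zero[OF DZ_metric x x] x by simp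
    qed
  next
    fix x y z assume x: "x \<in> T" and y: "y \<in> T" and z: "z \<in> T"
    have "al t * D1 x z \<le> al t * D1 x y + al t * D1 y z"
      using mult_left_mono[OF D1_t[OF x y z] w(1)] by (simp add: algebra_simps)
    moreover have "be t * DZ x z \<le> be t * DZ x y + be t * DZ y z"
      using mult_left_mono[OF Metric_space.triangle[OF DZ_metric x y z] w(2)] by (simp add: algebra_simps)
    moreover have "ga t * D2 x z \<le> ga t * D2 x y + ga t * D2 y z"
      using mult_left_mono[OF D2_t[OF x y z] w(3)] by (simp add: algebra_simps)
    ultimately show "rho t x z \<le> rho t x y + rho t y z" unfolding rho_def by simp
  qed
qed

lemma rho_bd:
  assumes "0 \<le> t" "t \<le> 2" "c \<in> T" "c' \<in> T"
  shows "\<bar>rho t c c' - dM (I c) (I c')\<bar> \<le> 2*r"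
proof -
  have w: "0 \<le> al t" "0 \<le> be t" "0 \<le> ga t" "al t + be t + ga t = 1" using w_nonneg assms by auto
  define E where "E = dM (I c) (I c')"
  note EE = EE_gen[OF w(4)]
  have "rho t c c' - E = al t * (D1 c c' - E) + be t * (DZ c c' - E) + ga t * (D2 c c' - E)"
    unfolding rho_def using EE by (simp add: algebra_simps)
  also have "\<bar>\<dots>\<bar> \<le> al t * \<bar>D1 c c' - E\<bar> + be t * \<bar>DZ c c' - E\<bar> + ga t * \<bar>D2 c c' - E\<bar>"
    by (rule abs3[OF w(1-3)])
  also have "\<dots> \<le> al t * (2*r) + be t * (2*r) + ga t * (2*r)"
    using w D1_bd[OF assms(3,4)] D2_bd[OF assms(3,4)] DZ_bd[OF assms(3,4)] unfolding E_def
    by (intro add_mono mult_left_mono) auto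
  also have "\<dots> = 2*r" using EE[of "2*r"] by simp
  finally show ?thesis unfolding E_def .
qed

end



context gh_construct begin

lemma sphere_gen:
  fixes Y :: "'y set" and dY e
  assumes S1: "e ` Y \<subseteq> S" "S \<subseteq> T" and MS: "Metric_space S \<rho>"
    and MY: "Metric_space Y dY" and ghY: "dGH M dM Y dY = ereal r"
    and IeY: "I ` e ` Y = M"
    and iso: "\<forall>a\<in>Y. \<forall>a'\<in>Y. \<rho> (e a) (e a') = dY a a'"
    and bd: "\<forall>c\<in>S. \<forall>c'\<in>S. \<bar>\<rho> c c' - dM (I c) (I c')\<bar> \<le> 2*r"
  shows "dGH M dM S \<rho> = ereal r"
proof -
  have IS: "I ` S = M" using IeY I_T S1 by blast
  have bd': "\<forall>c\<in>S. \<forall>c'\<in>S. \<bar>dM (I c) (I c') - \<rho> c c'\<bar> \<le> 2*r" using bd by (simp add: abs_minus_commute)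
  have le: "dGH M dM S \<rho> \<le> ereal r"
    by (rule dGH_upper[OF MM MS IS bd' rpos])
  have "\<not> dGH M dM S \<rho> < ereal r"
  proof
    assume lt: "dGH M dM S \<rho> < ereal r"
    obtain h0 where h0: "dGH M dM S \<rho> < ereal h0" "ereal h0 < ereal r" using ereal_dense2[OF lt] by blast
    define h2 where "h2 = max h0 (r/2)"
    have "ereal h0 \<le> ereal h2" unfolding h2_def by simp
    then have h2a: "dGH M dM S \<rho> < ereal h2" using h0(1) by (rule less_le_trans[rotated])
    have h2b: "h2 < r" "0 < h2" using h0(2) rpos unfolding h2_def by auto
    have sep: "\<forall>x\<in>M. \<forall>x'\<in>M. x \<noteq> x' \<longrightarrow> dM x x' > 2*h2" using dMsep h2b by force
    obtain \<phi> where phi: "\<phi> ` S = M" "\<forall>y\<in>S. \<forall>y'\<in>S. \<bar>dM (\<phi> y) (\<phi> y') - \<rho> y y'\<bar> \<le> 2*h2"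
      using dGH_corr[OF MM MS h2a sep] by blast
    have "2*h2 + 2*r \<le> L" using h2b L4 by simp
    then have eq: "\<forall>x\<in>S. \<phi> x = I x"
      by (rule dGH_unique[OF MM sepL eL phi(1) IS phi(2) bd'])
    define \<psi> where "\<psi> = \<phi> \<circ> e"
    have "\<psi> ` Y = M" unfolding \<psi>_def using eq S1 IeY by (force simp: image_comp[symmetric])
    moreover have "\<forall>a\<in>Y. \<forall>a'\<in>Y. \<bar>dM (\<psi> a) (\<psi> a') - dY a a'\<bar> \<le> 2*h2"
    proof (intro ballI)
      fix a a' assume a: "a \<in> Y" and a': "a' \<in> Y"
      then have "e a \<in> S" "e a' \<in> S" using S1 by auto
      then have "\<bar>dM (\<phi> (e a)) (\<phi> (e a')) - \<rho> (e a) (e a')\<bar> \<le> 2*h2" using phi(2) by blast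
      then show "\<bar>dM (\<psi> a) (\<psi> a') - dY a a'\<bar> \<le> 2*h2" using iso a a' unfolding \<psi>_def by simp
    qed
    ultimately have "dGH M dM Y dY \<le> ereal h2" by (rule dGH_upper[OF MM MY _ _ h2b(2)])
    then show False using ghY h2b(1) by simp
  qed
  then show ?thesis using le by (simp add: not_less)
qed

lemma IeY1: "I ` e1 ` Y1 = M" using I_U1 unfolding U1_def .
lemma IeY2: "I ` e2 ` Y2 = M" using I_U2 unfolding U2_def .

lemma rho_U1: "0 \<le> t \<Longrightarrow> t \<le> 1 \<Longrightarrow> c \<in> U1 \<Longrightarrow> c' \<in> U1 \<Longrightarrow> rho t c c' = d1 (p1 c) (p1 c')"
  unfolding rho_def using D1_U1 DZ_U1 by (simp add: al_def be_def ga_def algebra_simps)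
lemma rho_U2: "1 \<le> t \<Longrightarrow> t \<le> 2 \<Longrightarrow> c \<in> U2 \<Longrightarrow> c' \<in> U2 \<Longrightarrow> rho t c c' = d2 (p2 c) (p2 c')"
  unfolding rho_def using D2_U2 DZ_U2 by (simp add: al_def be_def ga_def algebra_simps)

lemma e1U1: "a \<in> Y1 \<Longrightarrow> e1 a \<in> U1" unfolding U1_def by blast
lemma e2U2: "a \<in> Y2 \<Longrightarrow> e2 a \<in> U2" unfolding U2_def by blast

definition "gpath t = (if t \<le> 0 then (U1, D1) else if 2 \<le> t then (U2, D2) else (T, rho t))"

lemma gpath_sphere:
  assumes "0 \<le> t" "t \<le> 2"
  shows "Metric_space (fst (gpath t)) (snd (gpath t)) \<and> dGH M dM (fst (gpath t)) (snd (gpath t)) = ereal r"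
proof -
  consider "t = 0" | "0 < t" "t \<le> 1" | "1 \<le> t" "t < 2" | "t = 2" using assms by linarith
  then show ?thesis
  proof cases
    case 1
    have "dGH M dM U1 D1 = ereal r"
    proof (rule sphere_gen[OF _ U1_T D1_metric M1 gh1 IeY1])
      show "e1 ` Y1 \<subseteq> U1" unfolding U1_def by simp
      show "\<forall>a\<in>Y1. \<forall>a'\<in>Y1. D1 (e1 a) (e1 a') = d1 a a'" using D1_U1 e1U1 p1_e1 by simp
      show "\<forall>c\<in>U1. \<forall>c'\<in>U1. \<bar>D1 c c' - dM (I c) (I c')\<bar> \<le> 2 * r" using D1_bd U1_T by blast
    qed
    then show ?thesis using 1 D1_metric by (simp add: gpath_def)
  next
    case 2
    have "dGH M dM T (rho t) = ereal r"
    proof (rule sphere_gen[OF _ _ rho_metric M1 gh1 IeY1])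
      show "e1 ` Y1 \<subseteq> T" using U1_T unfolding U1_def by simp
      show "\<forall>a\<in>Y1. \<forall>a'\<in>Y1. rho t (e1 a) (e1 a') = d1 a a'" using rho_U1 2 e1U1 p1_e1 by simp
      show "\<forall>c\<in>T. \<forall>c'\<in>T. \<bar>rho t c c' - dM (I c) (I c')\<bar> \<le> 2 * r" using rho_bd 2 by simp
    qed (use 2 in auto)
    then show ?thesis using 2 rho_metric[of t] by (simp add: gpath_def)
  next
    case 3
    have "dGH M dM T (rho t) = ereal r"
    proof (rule sphere_gen[OF _ _ rho_metric M2 gh2 IeY2])
      show "e2 ` Y2 \<subseteq> T" using U2_T unfolding U2_def by simp
      show "\<forall>a\<in>Y2. \<forall>a'\<in>Y2. rho t (e2 a) (e2 a') = d2 a a'" using rho_U2 3 e2U2 p2_e2 by simp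
      show "\<forall>c\<in>T. \<forall>c'\<in>T. \<bar>rho t c c' - dM (I c) (I c')\<bar> \<le> 2 * r" using rho_bd 3 by simp
    qed (use 3 in auto)
    then show ?thesis using 3 rho_metric[of t] by (simp add: gpath_def)
  next
    case 4
    have "dGH M dM U2 D2 = ereal r"
    proof (rule sphere_gen[OF _ U2_T D2_metric M2 gh2 IeY2])
      show "e2 ` Y2 \<subseteq> U2" unfolding U2_def by simp
      show "\<forall>a\<in>Y2. \<forall>a'\<in>Y2. D2 (e2 a) (e2 a') = d2 a a'" using D2_U2 e2U2 p2_e2 by simp
      show "\<forall>c\<in>U2. \<forall>c'\<in>U2. \<bar>D2 c c' - dM (I c) (I c')\<bar> \<le> 2 * r" using D2_bd U2_T by blast
    qed
    then show ?thesis using 4 D2_metric by (simp add: gpath_def)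
  qed
qed

end



lemma lin_id: fixes a1 a2 g1 g2 D1 D2 DZ :: real
  shows "(a1 * D1 + (1 - a1 - g1) * DZ + g1 * D2) - (a2 * D1 + (1 - a2 - g2) * DZ + g2 * D2)
   = (a1 - a2) * (D1 - DZ) + (g1 - g2) * (D2 - DZ)"
  by (simp add: algebra_simps)

context gh_construct begin

lemma al_lip: "\<bar>al u - al t\<bar> \<le> \<bar>u - t\<bar>"
  unfolding al_def by (simp add: max_def abs_le_iff) linarith
lemma ga_lip: "\<bar>ga u - ga t\<bar> \<le> \<bar>u - t\<bar>"
  unfolding ga_def by (simp add: max_def abs_le_iff) linarith

lemma D1Z: "c \<in> T \<Longrightarrow> c' \<in> T \<Longrightarrow> \<bar>D1 c c' - DZ c c'\<bar> \<le> 4*r"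
  using D1_bd[of c c'] DZ_bd[of c c'] by (simp add: abs_le_iff)
lemma D2Z: "c \<in> T \<Longrightarrow> c' \<in> T \<Longrightarrow> \<bar>D2 c c' - DZ c c'\<bar> \<le> 4*r"
  using D2_bd[of c c'] DZ_bd[of c c'] by (simp add: abs_le_iff)

lemma rho_diff:
  assumes c: "c \<in> T" "c' \<in> T"
  shows "\<bar>rho u c c' - rho t c c'\<bar> \<le> 8*r*\<bar>u - t\<bar>"
proof -
  have eq: "rho u c c' - rho t c c' = (al u - al t) * (D1 c c' - DZ c c') + (ga u - ga t) * (D2 c c' - DZ c c')"
    unfolding rho_def be_def by (rule lin_id)
  have m1: "\<bar>al u - al t\<bar> * \<bar>D1 c c' - DZ c c'\<bar> \<le> \<bar>u - t\<bar> * (4*r)"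
    by (rule mult_mono[OF al_lip D1Z[OF c]]) simp_all
  have m2: "\<bar>ga u - ga t\<bar> * \<bar>D2 c c' - DZ c c'\<bar> \<le> \<bar>u - t\<bar> * (4*r)"
    by (rule mult_mono[OF ga_lip D2Z[OF c]]) simp_all
  have "\<bar>rho u c c' - rho t c c'\<bar> \<le> \<bar>al u - al t\<bar> * \<bar>D1 c c' - DZ c c'\<bar> + \<bar>ga u - ga t\<bar> * \<bar>D2 c c' - DZ c c'\<bar>"
    unfolding eq abs_mult[symmetric] by (rule abs_triangle_ineq)
  moreover have "\<bar>u - t\<bar> * (4*r) + \<bar>u - t\<bar> * (4*r) = 8*r*\<bar>u - t\<bar>" by (simp add: algebra_simps)
  ultimately show ?thesis using m1 m2 by linarith
qed

lemma rho_D1: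
  assumes "0 \<le> t" "t \<le> 1" "c \<in> T" "c' \<in> T"
  shows "\<bar>rho t c c' - D1 c c'\<bar> \<le> 4*r*t"
proof -
  have w: "al t = 1 - t" "ga t = 0" "be t = t" using assms unfolding al_def ga_def be_def by auto
  have "rho t c c' - D1 c c' = t * (DZ c c' - D1 c c')"
    unfolding rho_def w by (simp add: algebra_simps)
  also have "\<bar>\<dots>\<bar> = t * \<bar>D1 c c' - DZ c c'\<bar>" using assms by (simp add: abs_mult abs_minus_commute)
  also have "\<dots> \<le> t * (4*r)" using D1Z[OF assms(3,4)] assms by (intro mult_left_mono) auto
  finally show ?thesis by (simp add: algebra_simps)
qed

lemma rho_D2:
  assumes "1 \<le> t" "t \<le> 2" "c \<in> T" "c' \<in> T"
  shows "\<bar>rho t c c' - D2 c c'\<bar> \<le> 4*r*(2-t)"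
proof -
  have w: "al t = 0" "ga t = t - 1" "be t = 2 - t" using assms unfolding al_def ga_def be_def by auto
  have "rho t c c' - D2 c c' = (2-t) * (DZ c c' - D2 c c')"
    unfolding rho_def w by (simp add: algebra_simps)
  also have "\<bar>\<dots>\<bar> = (2-t) * \<bar>D2 c c' - DZ c c'\<bar>" using assms by (simp add: abs_mult abs_minus_commute)
  also have "\<dots> \<le> (2-t) * (4*r)" using D2Z[OF assms(3,4)] assms by (intro mult_left_mono) auto
  finally show ?thesis by (simp add: algebra_simps)
qed

lemma PT: "e1 ` P ` T = U1"
proof
  show "e1 ` P ` T \<subseteq> U1" using P_in unfolding U1_def by blast
  show "U1 \<subseteq> e1 ` P ` T"
  proof
    fix c assume c: "c \<in> U1"
    then have "P c = p1 c" "c \<in> T" using U1_T by (auto simp: P_def)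
    then show "c \<in> e1 ` P ` T" using e1_p1[OF c] by (metis image_eqI)
  qed
qed

lemma QT: "e2 ` Q ` T = U2"
proof
  show "e2 ` Q ` T \<subseteq> U2" using Q_in unfolding U2_def by blast
  show "U2 \<subseteq> e2 ` Q ` T"
  proof
    fix c assume c: "c \<in> U2"
    then have "Q c = p2 c" "c \<in> T" using U2_T by (auto simp: Q_def)
    then show "c \<in> e2 ` Q ` T" using e2_p2[OF c] by (metis image_eqI)
  qed
qed

lemma P_e1: "a \<in> Y1 \<Longrightarrow> P (e1 a) = a" using e1U1 p1_e1 by (simp add: P_def)
lemma Q_e2: "a \<in> Y2 \<Longrightarrow> Q (e2 a) = a" using e2U2 p2_e2 by (simp add: Q_def)

lemma closeA:
  assumes "0 < t" "t < 1" "0 < hh" "4*r*t \<le> 2*hh"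
  shows "dGH U1 D1 T (rho t) \<le> ereal hh"
proof (rule dGH_upper[OF D1_metric rho_metric _ _ assms(3)])
  show "(e1 \<circ> P) ` T = U1" using PT by (simp add: image_comp)
  show "\<forall>y\<in>T. \<forall>y'\<in>T. \<bar>D1 ((e1 \<circ> P) y) ((e1 \<circ> P) y') - rho t y y'\<bar> \<le> 2 * hh"
  proof (intro ballI)
    fix y y' assume y: "y \<in> T" "y' \<in> T"
    have "D1 ((e1 \<circ> P) y) ((e1 \<circ> P) y') = D1 y y'"
      using P_in[OF y(1)] P_in[OF y(2)] by (simp add: D1_def P_e1)
    then show "\<bar>D1 ((e1 \<circ> P) y) ((e1 \<circ> P) y') - rho t y y'\<bar> \<le> 2 * hh"
      using rho_D1[of t y y'] y assms by (simp add: abs_minus_commute)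
  qed
qed (use assms in auto)

lemma closeB:
  assumes "1 < t" "t < 2" "0 < hh" "4*r*(2-t) \<le> 2*hh"
  shows "dGH U2 D2 T (rho t) \<le> ereal hh"
proof (rule dGH_upper[OF D2_metric rho_metric _ _ assms(3)])
  show "(e2 \<circ> Q) ` T = U2" using QT by (simp add: image_comp)
  show "\<forall>y\<in>T. \<forall>y'\<in>T. \<bar>D2 ((e2 \<circ> Q) y) ((e2 \<circ> Q) y') - rho t y y'\<bar> \<le> 2 * hh"
  proof (intro ballI)
    fix y y' assume y: "y \<in> T" "y' \<in> T"
    have "D2 ((e2 \<circ> Q) y) ((e2 \<circ> Q) y') = D2 y y'"
      using Q_in[OF y(1)] Q_in[OF y(2)] by (simp add: D2_def Q_e2)
    then show "\<bar>D2 ((e2 \<circ> Q) y) ((e2 \<circ> Q) y') - rho t y y'\<bar> \<le> 2 * hh"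
      using rho_D2[of t y y'] y assms by (simp add: abs_minus_commute)
  qed
qed (use assms in auto)

lemma closeC:
  assumes "0 < t" "t < 2" "0 < u" "u < 2" "0 < hh" "8*r*\<bar>u - t\<bar> \<le> 2*hh"
  shows "dGH T (rho u) T (rho t) \<le> ereal hh"
proof (rule dGH_upper[OF rho_metric rho_metric _ _ assms(5)])
  show "id ` T = T" by simp
  show "\<forall>y\<in>T. \<forall>y'\<in>T. \<bar>rho u (id y) (id y') - rho t y y'\<bar> \<le> 2 * hh"
  proof (intro ballI)
    fix y y' assume "y \<in> T" "y' \<in> T"
    then have "\<bar>rho u y y' - rho t y y'\<bar> \<le> 8*r*\<bar>u - t\<bar>" by (rule rho_diff)
    then show "\<bar>rho u (id y) (id y') - rho t y y'\<bar> \<le> 2 * hh" using assms(6) by simp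
  qed
qed (use assms in auto)

lemma closeS1: "0 < hh \<Longrightarrow> dGH U1 D1 U1 D1 \<le> ereal hh"
  by (rule dGH_upper[OF D1_metric D1_metric, of id]) auto
lemma closeS2: "0 < hh \<Longrightarrow> dGH U2 D2 U2 D2 \<le> ereal hh"
  by (rule dGH_upper[OF D2_metric D2_metric, of id]) auto

lemma gpath_close:
  assumes u: "0 \<le> u" "u \<le> 2" and t: "0 \<le> t" "t \<le> 2" and ut: "\<bar>u - t\<bar> < 1"
    and ep: "0 < \<epsilon>" and ue: "8*r*\<bar>u - t\<bar> < \<epsilon>"
  shows "dGH (fst (gpath u)) (snd (gpath u)) (fst (gpath t)) (snd (gpath t)) < ereal \<epsilon>"
proof -
  define hh where "hh = \<epsilon>/2"
  have hh: "0 < hh" "hh < \<epsilon>" "8*r*\<bar>u - t\<bar> \<le> 2*hh" using ep ue unfolding hh_def by auto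
  have r0: "0 \<le> 4*r" using rpos by simp
  have "dGH (fst (gpath u)) (snd (gpath u)) (fst (gpath t)) (snd (gpath t)) \<le> ereal hh"
  proof -
    consider "u = 0" "t = 0" | "u = 0" "0 < t" "t < 1" | "0 < u" "u < 1" "t = 0"
      | "u = 2" "t = 2" | "u = 2" "1 < t" "t < 2" | "1 < u" "u < 2" "t = 2"
      | "0 < u" "u < 2" "0 < t" "t < 2"
      using u t ut by (cases "u = 0"; cases "t = 0"; cases "u = 2"; cases "t = 2") (auto simp: abs_if)
    then show ?thesis
    proof cases
      case 1 then show ?thesis using closeS1 hh by (simp add: gpath_def)
    next
      case 2
      have "0 \<le> r*t" using rpos 2 by simp
      then have "4*r*t \<le> 2*hh" using hh(3) 2 by simp
      then show ?thesis using closeA[of t hh] 2 hh by (simp add: gpath_def)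
    next
      case 3
      have "0 \<le> r*u" using rpos 3 by simp
      then have "4*r*u \<le> 2*hh" using hh(3) 3 by simp
      then show ?thesis using closeA[of u hh] 3 hh dGH_sym[of T "rho u" U1 D1] by (simp add: gpath_def)
    next
      case 4 then show ?thesis using closeS2 hh by (simp add: gpath_def)
    next
      case 5
      have "0 \<le> r*(2-t)" using rpos 5 by simp
      moreover have "\<bar>u - t\<bar> = 2 - t" using 5 by simp
      ultimately have "4*r*(2-t) \<le> 2*hh" using hh(3) by simp
      then show ?thesis using closeB[of t hh] 5 hh by (simp add: gpath_def)
    next
      case 6
      have "0 \<le> r*(2-u)" using rpos 6 by simp
      moreover have "\<bar>u - t\<bar> = 2 - u" using 6 by simp
      ultimately have "4*r*(2-u) \<le> 2*hh" using hh(3) by simp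
      then show ?thesis using closeB[of u hh] 6 hh dGH_sym[of T "rho u" U2 D2] by (simp add: gpath_def)
    next
      case 7 then show ?thesis using closeC[of t u hh] hh by (simp add: gpath_def)
    qed
  qed
  moreover have "ereal hh < ereal \<epsilon>" using hh(2) by simp
  ultimately show ?thesis by (rule le_less_trans)
qed

lemma gpath_main:
  "\<exists>(a::real) b (\<gamma> :: real \<Rightarrow> 'c set \<times> ('c \<Rightarrow> 'c \<Rightarrow> real)). a \<le> b \<and>
     (\<forall>t\<in>{a..b}. Metric_space (fst (\<gamma> t)) (snd (\<gamma> t)) \<and>
                  dGH M dM (fst (\<gamma> t)) (snd (\<gamma> t)) = ereal r) \<and>
     (\<forall>t\<in>{a..b}. \<forall>\<epsilon>>0. \<exists>\<delta>>0. \<forall>u\<in>{a..b}. \<bar>u - t\<bar> < \<delta> \<longrightarrow>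
          dGH (fst (\<gamma> u)) (snd (\<gamma> u)) (fst (\<gamma> t)) (snd (\<gamma> t)) < ereal \<epsilon>) \<and>
     isometric (fst (\<gamma> a)) (snd (\<gamma> a)) Y1 d1 \<and>
     isometric (fst (\<gamma> b)) (snd (\<gamma> b)) Y2 d2"
proof -
  have A: "\<forall>t\<in>{0..2}. Metric_space (fst (gpath t)) (snd (gpath t)) \<and> dGH M dM (fst (gpath t)) (snd (gpath t)) = ereal r"
    using gpath_sphere by auto
  have B: "\<forall>t\<in>{0..2}. \<forall>\<epsilon>>0. \<exists>\<delta>>0. \<forall>u\<in>{0..2}. \<bar>u - t\<bar> < \<delta> \<longrightarrow>
          dGH (fst (gpath u)) (snd (gpath u)) (fst (gpath t)) (snd (gpath t)) < ereal \<epsilon>"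
  proof (intro ballI allI impI)
    fix t :: real and \<epsilon> :: real assume t: "t \<in> {0..2}" and ep: "0 < \<epsilon>"
    define \<delta> where "\<delta> = min 1 (\<epsilon> / (8*r+1))"
    have d: "0 < \<delta>" using ep rpos unfolding \<delta>_def by auto
    show "\<exists>\<delta>>0. \<forall>u\<in>{0..2}. \<bar>u - t\<bar> < \<delta> \<longrightarrow>
          dGH (fst (gpath u)) (snd (gpath u)) (fst (gpath t)) (snd (gpath t)) < ereal \<epsilon>"
    proof (intro exI conjI ballI impI)
      show "0 < \<delta>" by (rule d)
      fix u assume u: "u \<in> {0..2}" and ud: "\<bar>u - t\<bar> < \<delta>"
      have u1: "\<bar>u - t\<bar> < 1" using ud unfolding \<delta>_def by simp
      have "\<bar>u - t\<bar> < \<epsilon> / (8*r+1)" using ud unfolding \<delta>_def by simp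
      then have "\<bar>u - t\<bar> * (8*r+1) < \<epsilon>" using rpos by (simp add: pos_less_divide_eq)
      moreover have "8*r*\<bar>u - t\<bar> \<le> \<bar>u - t\<bar> * (8*r+1)" by (simp add: algebra_simps)
      ultimately have "8*r*\<bar>u - t\<bar> < \<epsilon>" by linarith
      then show "dGH (fst (gpath u)) (snd (gpath u)) (fst (gpath t)) (snd (gpath t)) < ereal \<epsilon>"
        using gpath_close[OF _ _ _ _ u1 ep] u t by auto
    qed
  qed
  have isoC: "isometric U1 D1 Y1 d1"
    unfolding isometric_def
  proof (intro exI conjI)
    show "bij_betw p1 U1 Y1"
    proof (rule bij_betw_imageI)
      show "inj_on p1 U1" using e1_p1 by (metis inj_on_inverseI)
      show "p1 ` U1 = Y1" unfolding U1_def using p1_e1 by (force simp: image_image)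
    qed
    show "\<forall>x\<in>U1. \<forall>x'\<in>U1. d1 (p1 x) (p1 x') = D1 x x'"
      by (simp add: D1_U1)
  qed
  have "gpath 0 = (U1, D1)" by (simp add: gpath_def)
  then have C: "isometric (fst (gpath 0)) (snd (gpath 0)) Y1 d1" using isoC by simp
  have isoD: "isometric U2 D2 Y2 d2"
    unfolding isometric_def
  proof (intro exI conjI)
    show "bij_betw p2 U2 Y2"
    proof (rule bij_betw_imageI)
      show "inj_on p2 U2" using e2_p2 by (metis inj_on_inverseI)
      show "p2 ` U2 = Y2" unfolding U2_def using p2_e2 by (force simp: image_image)
    qed
    show "\<forall>x\<in>U2. \<forall>x'\<in>U2. d2 (p2 x) (p2 x') = D2 x x'"
      by (simp add: D2_U2)
  qed
  have "gpath 2 = (U2, D2)" by (simp add: gpath_def)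
  then have D: "isometric (fst (gpath 2)) (snd (gpath 2)) Y2 d2" using isoD by simp
show ?thesis
    apply (rule exI[where x=0])
    apply (rule exI[where x=2])
    apply (rule exI[where x=gpath])
    apply (intro conjI)
        apply simp
       apply (rule A)
      apply (rule B)
     apply (rule C)
    apply (rule D)
    done
qed
end



lemma idx_exists:
  fixes M :: "'m set" and Y :: "'y set"
  assumes MM: "Metric_space M dM" and MY: "Metric_space Y dY"
    and gh: "dGH M dM Y dY = ereal r" and rpos: "0 < r" and L4: "4*r < L"
    and sepL: "\<forall>m\<in>M. \<forall>m'\<in>M. m \<noteq> m' \<longrightarrow> dM m m' > L"
    and eL: "\<forall>\<sigma>. bij_betw \<sigma> M M \<and> (\<exists>x\<in>M. \<sigma> x \<noteq> x) \<longrightarrow> distortion M dM \<sigma> > ereal L"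
  shows "\<exists>idx. idx ` Y = M \<and> (\<forall>a\<in>Y. \<forall>a'\<in>Y. \<bar>dM (idx a) (idx a') - dY a a'\<bar> \<le> 2*r)"
proof -
  define \<eta> where "\<eta> = (L - 4*r)/4"
  have \<eta>1: "0 < \<eta>" using L4 unfolding \<eta>_def by auto
  have \<eta>2: "4*\<eta> = L - 4*r" unfolding \<eta>_def by simp
  note \<eta> = \<eta>1 \<eta>2
  have ex: "\<exists>\<phi>. \<phi> ` Y = M \<and> (\<forall>a\<in>Y. \<forall>a'\<in>Y. \<bar>dM (\<phi> a) (\<phi> a') - dY a a'\<bar> \<le> 2*(r+e))"
    if e: "0 < e" "e \<le> \<eta>" for e
  proof (rule dGH_corr[OF MM MY])
    show "dGH M dM Y dY < ereal (r + e)" using gh e by simp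
    show "\<forall>x\<in>M. \<forall>x'\<in>M. x \<noteq> x' \<longrightarrow> 2 * (r + e) < dM x x'"
      using sepL \<eta> e rpos by force
  qed
  obtain \<phi>0 where p0: "\<phi>0 ` Y = M" "\<forall>a\<in>Y. \<forall>a'\<in>Y. \<bar>dM (\<phi>0 a) (\<phi>0 a') - dY a a'\<bar> \<le> 2*(r+\<eta>)"
    using ex[OF \<eta>(1) order_refl] by blast
  have all: "\<bar>dM (\<phi>0 a) (\<phi>0 a') - dY a a'\<bar> \<le> 2*(r+e)" if e: "0 < e" "e \<le> \<eta>" and a: "a \<in> Y" "a' \<in> Y" for e a a'
  proof -
    obtain \<phi> where p: "\<phi> ` Y = M" "\<forall>a\<in>Y. \<forall>a'\<in>Y. \<bar>dM (\<phi> a) (\<phi> a') - dY a a'\<bar> \<le> 2*(r+e)"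
      using ex[OF e] by blast
    have "2*(r+\<eta>) + 2*(r+e) \<le> L" using \<eta> e by simp
    then have "\<forall>x\<in>Y. \<phi>0 x = \<phi> x" by (rule dGH_unique[OF MM sepL eL p0(1) p(1) p0(2) p(2)])
    then show ?thesis using p(2) a by simp
  qed
  have "\<bar>dM (\<phi>0 a) (\<phi>0 a') - dY a a'\<bar> \<le> 2*r" if a: "a \<in> Y" "a' \<in> Y" for a a'
  proof (rule field_le_epsilon)
    fix e :: real assume e: "0 < e"
    define e' where "e' = min \<eta> (e/2)"
    have "0 < e'" "e' \<le> \<eta>" "2*e' \<le> e" using e \<eta> unfolding e'_def by auto
    then show "\<bar>dM (\<phi>0 a) (\<phi>0 a') - dY a a'\<bar> \<le> 2*r + e" using all[of e' a a'] a by simp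
  qed
  then show ?thesis using p0(1) by blast
qed

lemma ereal_div4: fixes X :: ereal shows "ereal r < X / 4 \<Longrightarrow> ereal (4*r) < X"
  by (cases X) auto
lemma ereal_div6: fixes X :: ereal shows "ereal r < X / 6 \<Longrightarrow> ereal (6*r) < X"
  by (cases X) auto

theorem theorem3:
  fixes M :: "'m set" and dM :: "'m \<Rightarrow> 'm \<Rightarrow> real"
    and Y1 :: "'a set" and d1 :: "'a \<Rightarrow> 'a \<Rightarrow> real"
    and Y2 :: "'b set" and d2 :: "'b \<Rightarrow> 'b \<Rightarrow> real"
    and r :: real
  assumes "generic M dM"
    and "0 < r"
    and "ereal r < s_inv M dM / 4" and "ereal r < e_inv M dM / 4" and "ereal r < t_inv M dM / 6"
    and "Metric_space Y1 d1" and "dGH M dM Y1 d1 = ereal r"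
    and "Metric_space Y2 d2" and "dGH M dM Y2 d2 = ereal r"
    and "\<exists>g :: 'a \<times> 'b \<times> 'm \<times> real \<Rightarrow> 'c. inj_on g (Y1 \<times> Y2 \<times> M \<times> (UNIV :: real set))"
  shows "\<exists>(a::real) b (\<gamma> :: real \<Rightarrow> 'c set \<times> ('c \<Rightarrow> 'c \<Rightarrow> real)). a \<le> b \<and>
     (\<forall>t\<in>{a..b}. Metric_space (fst (\<gamma> t)) (snd (\<gamma> t)) \<and>
                  dGH M dM (fst (\<gamma> t)) (snd (\<gamma> t)) = ereal r) \<and>
     (\<forall>t\<in>{a..b}. \<forall>\<epsilon>>0. \<exists>\<delta>>0. \<forall>u\<in>{a..b}. \<bar>u - t\<bar> < \<delta> \<longrightarrow>
          dGH (fst (\<gamma> u)) (snd (\<gamma> u)) (fst (\<gamma> t)) (snd (\<gamma> t)) < ereal \<epsilon>) \<and>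
     isometric (fst (\<gamma> a)) (snd (\<gamma> a)) Y1 d1 \<and>
     isometric (fst (\<gamma> b)) (snd (\<gamma> b)) Y2 d2"
proof -
  note A = assms
  have gen: "Metric_space M dM" "infinite M \<or> 3 \<le> card M"
    using A(1) unfolding generic_def by auto
  note MM = gen(1)
  have s4: "ereal (4*r) < s_inv M dM" using ereal_div4[OF A(3)] .
  have e4: "ereal (4*r) < e_inv M dM" using ereal_div4[OF A(4)] .
  have t6: "ereal (6*r) < t_inv M dM" using ereal_div6[OF A(5)] .
  have "ereal (4*r) < min (s_inv M dM) (e_inv M dM)" using s4 e4 by simp
  then obtain L where L: "ereal (4*r) < ereal L" "ereal L < min (s_inv M dM) (e_inv M dM)"
    using ereal_dense2 by blast
  have L4: "4*r < L" using L(1) by simp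
  have sepL: "\<forall>m\<in>M. \<forall>m'\<in>M. m \<noteq> m' \<longrightarrow> dM m m' > L"
  proof (intro ballI impI)
    fix m m' assume mm: "m \<in> M" "m' \<in> M" "m \<noteq> m'"
    have "s_inv M dM \<le> ereal (dM m m')" unfolding s_inv_def
      by (rule INF_lower2[of "(m, m')"]) (use mm in auto)
    moreover have "ereal L < s_inv M dM" using L(2) by simp
    ultimately have "ereal L < ereal (dM m m')" using less_le_trans by blast
    then show "dM m m' > L" by simp
  qed
  have eL: "\<forall>\<sigma>. bij_betw \<sigma> M M \<and> (\<exists>x\<in>M. \<sigma> x \<noteq> x) \<longrightarrow> distortion M dM \<sigma> > ereal L"
  proof (intro allI impI)
    fix \<sigma> assume "bij_betw \<sigma> M M \<and> (\<exists>x\<in>M. \<sigma> x \<noteq> x)"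
    then have "e_inv M dM \<le> distortion M dM \<sigma>" unfolding e_inv_def by (intro INF_lower) auto
    moreover have "ereal L < e_inv M dM" using L(2) by simp
    ultimately show "distortion M dM \<sigma> > ereal L" using less_le_trans by blast
  qed
  have tri: "\<forall>x\<in>M. \<forall>y\<in>M. \<forall>z\<in>M. x \<noteq> y \<and> y \<noteq> z \<and> x \<noteq> z \<longrightarrow> dM x y + dM y z - dM x z > 2*r"
  proof (intro ballI impI)
    fix x y z assume xyz: "x \<in> M" "y \<in> M" "z \<in> M" "x \<noteq> y \<and> y \<noteq> z \<and> x \<noteq> z"
    have "t_inv M dM \<le> ereal (dM x y + dM y z - dM x z)" unfolding t_inv_def
      by (rule INF_lower2[of "(x, y, z)"]) (use xyz in auto)
    then have "ereal (6*r) < ereal (dM x y + dM y z - dM x z)" using t6 less_le_trans by blast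
    then show "dM x y + dM y z - dM x z > 2*r" using A(2) by simp
  qed
  obtain idx1 where i1: "idx1 ` Y1 = M" "\<forall>a\<in>Y1. \<forall>a'\<in>Y1. \<bar>dM (idx1 a) (idx1 a') - d1 a a'\<bar> \<le> 2*r"
    using idx_exists[OF MM A(6) A(7) A(2) L4 sepL eL] by blast
  obtain idx2 where i2: "idx2 ` Y2 = M" "\<forall>a\<in>Y2. \<forall>a'\<in>Y2. \<bar>dM (idx2 a) (idx2 a') - d2 a a'\<bar> \<le> 2*r"
    using idx_exists[OF MM A(8) A(9) A(2) L4 sepL eL] by blast
  have Mne: "M \<noteq> {}" using gen(2) by auto
  obtain m0 where m0: "m0 \<in> M" using Mne by blast
  obtain a0 where a0: "a0 \<in> Y1" using i1(1) Mne by blast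
  obtain b0 where b0: "b0 \<in> Y2" using i2(1) Mne by blast
  obtain g :: "'a \<times> 'b \<times> 'm \<times> real \<Rightarrow> 'c" where g: "inj_on g (Y1 \<times> Y2 \<times> M \<times> (UNIV :: real set))"
    using A(10) by blast
  define e1 where "e1 a = g (a, b0, m0, 0)" for a
  define e2 where "e2 b = g (a0, b, m0, 1)" for b
  have inj1: "inj_on e1 Y1"
    by (rule inj_onI) (use g b0 m0 in \<open>auto simp: e1_def dest: inj_onD\<close>)
  have inj2: "inj_on e2 Y2"
    by (rule inj_onI) (use g a0 m0 in \<open>auto simp: e2_def dest: inj_onD\<close>)
  have disj: "e1 ` Y1 \<inter> e2 ` Y2 = {}"
  proof (rule ccontr)
    assume "e1 ` Y1 \<inter> e2 ` Y2 \<noteq> {}"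
    then obtain a b where ab: "a \<in> Y1" "b \<in> Y2" "g (a, b0, m0, 0) = g (a0, b, m0, 1)"
      unfolding e1_def e2_def by auto
    then have "(a, b0, m0, 0::real) = (a0, b, m0, 1)"
      using g a0 b0 m0 by (intro inj_onD[OF g]) auto
    then show False by simp
  qed
  interpret gh_construct M dM Y1 d1 Y2 d2 r L idx1 idx2 e1 e2
    by (rule gh_construct.intro[OF MM A(6) A(8) A(2) less_imp_le[OF L4] sepL eL tri i1 i2 A(7) A(9) inj1 inj2 disj])
  show ?thesis by (rule gpath_main)
qed


end
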